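(* Let $\lambda$ be an infinite cardinal and $\chi$ either $2$ or an infinite cardinal, with $\chi<\lambda$. For every $S\in J_\chi[\lambda^+]$, the set $S\cap E^{\lambda^+}_{\mathrm{cf}(\lambda)}$ is nonstationary.
   Context: $E^\kappa_\theta=\{\alpha<\kappa\mid\mathrm{cf}(\alpha)=\theta\}$. For regular uncountable $\kappa$, $J_\chi[\kappa]$ is the collection of all $S\subseteq\kappa$ for which there exist a club $C\subseteq\kappa$ and functions $f_i:\kappa\to[\kappa]^{<\chi}$ ($i<\kappa$) such that for every $\alpha\in S\cap C$, every regressive $f:\alpha\to\alpha$ and every cofinal $B\subseteq\alpha$, there is $i<\alpha$ with $\sup\{\beta\in B\mid f(\beta)\in f_i(\beta)\}=\alpha$. *)

theory Defs
  imports Main "HOL-Library.Equipollence"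
begin

text \<open>Convention: ordinals below a regular cardinal kappa are modelled as the elements
of a type 'k of class wellorder whose order type is kappa. Cardinal comparisons use
equipollence.\<close>

definition initial_ord :: "'k::wellorder \<Rightarrow> bool" where
  "initial_ord a \<longleftrightarrow> (\<forall>y<a. {..<y} \<prec> {..<a})"

definition weakly_cofinal :: "'k::wellorder set \<Rightarrow> 'k \<Rightarrow> bool" where
  "weakly_cofinal B a \<longleftrightarrow> B \<subseteq> {..<a} \<and> (\<forall>g<a. \<exists>b\<in>B. g \<le> b)"

definition cof :: "'k::wellorder \<Rightarrow> 'k" where
  "cof a = (LEAST c. \<exists>B. weakly_cofinal B a \<and> B \<approx> {..<c})"

definition E_cof :: "'k::wellorder \<Rightarrow> 'k set" where
  "E_cof t = {a. cof a = t}"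

definition sup_is :: "'k::wellorder set \<Rightarrow> 'k \<Rightarrow> bool" where
  "sup_is X a \<longleftrightarrow> X \<subseteq> {..<a} \<and> (\<forall>g<a. \<exists>x\<in>X. g < x)"

definition club :: "'k::wellorder set \<Rightarrow> bool" where
  "club C \<longleftrightarrow> (\<forall>x. \<exists>c\<in>C. x < c) \<and>
     (\<forall>a. (\<exists>g. g < a) \<and> (\<forall>b<a. \<exists>c\<in>C. b < c \<and> c < a) \<longrightarrow> a \<in> C)"

definition stationary :: "'k::wellorder set \<Rightarrow> bool" where
  "stationary S \<longleftrightarrow> (\<forall>C. club C \<longrightarrow> S \<inter> C \<noteq> {})"

definition regressive_on :: "('k::wellorder \<Rightarrow> 'k) \<Rightarrow> 'k \<Rightarrow> bool" where
  "regressive_on f a \<longleftrightarrow> (\<forall>b<a. f b < a \<and> ((\<exists>g. g < b) \<longrightarrow> f b < b))"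

text \<open>The ideal J_chi[kappa], kappa being the order type of 'k.\<close>
definition J_ideal :: "'k::wellorder \<Rightarrow> 'k set set" where
  "J_ideal chi = {S. \<exists>C (F :: 'k \<Rightarrow> 'k \<Rightarrow> 'k set).
     club C \<and> (\<forall>i b. F i b \<prec> {..<chi}) \<and>
     (\<forall>a\<in>S \<inter> C. \<forall>f. regressive_on f a \<longrightarrow>
        (\<forall>B. sup_is B a \<longrightarrow> (\<exists>i<a. sup_is {b\<in>B. f b \<in> F i b} a)))}"

end

theory Submission
  imports Defs
begin

lemma union_lepoll_times:
  assumes "\<And>i. i \<in> A \<Longrightarrow> X i \<lesssim> Y"
  shows "(\<Union>i\<in>A. X i) \<lesssim> A \<times> Y"
proof -
  have "(\<Union>i\<in>A. X i) \<subseteq> snd ` (Sigma A X)"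
  proof
    fix y assume "y \<in> (\<Union>i\<in>A. X i)"
    then obtain i where "i \<in> A" "y \<in> X i" by blast
    then have "(i, y) \<in> Sigma A X" by blast
    then show "y \<in> snd ` (Sigma A X)" by (rule rev_image_eqI) simp
  qed
  then have "(\<Union>i\<in>A. X i) \<lesssim> Sigma A X" by (rule subset_image_lepoll)
  also have "Sigma A X \<lesssim> Sigma A (\<lambda>_. Y)" by (rule Sigma_lepoll_mono) (simp_all add: assms)
  finally show ?thesis .
qed

lemma square_lesspoll:
  assumes "M \<prec> L" "infinite L"
  shows "M \<times> M \<prec> L"
proof (cases "finite M")
  case True
  then have "finite (M \<times> M)" by simp
  then show ?thesis using assms(2) by (rule finite_lesspoll_infinite[rotated])
next
  case False
  have "M \<times> M \<approx> M"
    by (rule eqpoll_iff_card_of_ordIso[THEN iffD2, OF card_of_Times_same_infinite[OF False]])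
  then show ?thesis using assms(1) by (rule eq_lesspoll_trans)
qed

lemma cof_ex:
  fixes x :: "'k::wellorder"
  shows "\<exists>B. weakly_cofinal B x \<and> B \<approx> {..<cof x}"
proof -
  have "weakly_cofinal {..<x} x \<and> {..<x} \<approx> {..<x}" by (auto simp: weakly_cofinal_def)
  then have "\<exists>(c::'k) B. weakly_cofinal B x \<and> B \<approx> {..<c}" by blast
  then show ?thesis unfolding cof_def by (rule LeastI_ex)
qed

lemma cof_le:
  fixes x :: "'k::wellorder"
  assumes "weakly_cofinal B x" "B \<approx> {..<c}"
  shows "cof x \<le> c"
  unfolding cof_def using assms by (blast intro: Least_le)

lemma lim_of_initial:
  fixes lam :: "'k::wellorder"
  assumes "initial_ord lam" "infinite {..<lam}" "y < lam"
  shows "\<exists>z. y < z \<and> z < lam"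
proof (rule ccontr)
  assume nz: "\<not> ?thesis"
  have eq: "{..<lam} = insert y {..<y}"
  proof (intro set_eqI iffI)
    fix x assume "x \<in> {..<lam}"
    then have "x < lam" by simp
    then have "\<not> y < x" using nz by blast
    then show "x \<in> insert y {..<y}" by (auto simp: not_less order.order_iff_strict)
  qed (use assms(3) in auto)
  then have "infinite {..<y}" using assms(2) by (metis finite_insert)
  then have "insert y {..<y} \<approx> {..<y}" by (rule infinite_insert_eqpoll)
  then have "{..<lam} \<approx> {..<y}" using eq by simp
  moreover have "{..<y} \<prec> {..<lam}" using assms(1,3) by (simp add: initial_ord_def)
  ultimately have "{..<lam} \<prec> {..<lam}" by (rule eq_lesspoll_trans)
  then show False by simp
qed

theorem proposition3p3:
  fixes lam chi :: "'k::wellorder"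
  assumes lam_card: "initial_ord lam" and lam_inf: "infinite {..<lam}"
    and succ1: "\<forall>x::'k. {..<x} \<lesssim> {..<lam}"
    and succ2: "\<not> (UNIV :: 'k set) \<lesssim> {..<lam}"
    and chi: "(finite {..<chi} \<and> card {..<chi} = 2) \<or> (infinite {..<chi} \<and> initial_ord chi)"
    and chi_lt: "chi < lam"
    and S: "S \<in> J_ideal chi"
  shows "\<not> stationary (S \<inter> E_cof (cof lam))"
proof -
  obtain C and F :: "'k \<Rightarrow> 'k \<Rightarrow> 'k set" where C: "club C" and Fsm: "\<forall>i b. F i b \<prec> {..<chi}"
    and J: "\<forall>a\<in>S \<inter> C. \<forall>f. regressive_on f a \<longrightarrow>
        (\<forall>B. sup_is B a \<longrightarrow> (\<exists>i<a. sup_is {b\<in>B. f b \<in> F i b} a))"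
    using S unfolding J_ideal_def by blast
  define C' where "C' = {a\<in>C. lam < a}"
  have club': "club C'"
    unfolding club_def
  proof (intro conjI allI impI)
    fix x
    obtain c where "c \<in> C" "max x lam < c" using C unfolding club_def by blast
    then show "\<exists>c\<in>C'. x < c" unfolding C'_def by auto
  next
    fix a assume H: "(\<exists>g. g < a) \<and> (\<forall>b<a. \<exists>c\<in>C'. b < c \<and> c < a)"
    then have "a \<in> C" using C unfolding club_def C'_def by blast
    moreover obtain g where "g < a" using H by blast
    then obtain c where "c \<in> C'" "c < a" using H by blast
    then have "lam < a" unfolding C'_def by auto
    ultimately show "a \<in> C'" unfolding C'_def by auto
  qed
  define \<theta> where "\<theta> = cof lam"
  define z0 :: 'k where "z0 = (LEAST x. True)"
  have z0le: "z0 \<le> x" for x unfolding z0_def by (rule Least_le) simp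
  obtain E where E: "weakly_cofinal E lam" "E \<approx> {..<\<theta>}" using cof_ex \<theta>_def by blast
  have thinf: "infinite {..<\<theta>}"
  proof
    assume fin: "finite {..<\<theta>}"
    then have finE: "finite E" using E(2) eqpoll_finite_iff by blast
    obtain y where "y < lam" using lam_inf by (metis finite.emptyI lessThan_iff subsetI subset_empty)
    then obtain e where "e \<in> E" using E(1) unfolding weakly_cofinal_def by blast
    then have "E \<noteq> {}" by auto
    then have "Max E \<in> E" using finE by simp
    then have "Max E < lam" using E(1) unfolding weakly_cofinal_def by auto
    then obtain z where "Max E < z" "z < lam" using lim_of_initial lam_card lam_inf by blast
    then obtain e' where "e' \<in> E" "z \<le> e'" using E(1) unfolding weakly_cofinal_def by blast
    then show False using finE \<open>Max E < z\<close> by (meson Max_ge leD order_le_less_trans)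
  qed
  have key: False if a1: "\<alpha> \<in> S" and a2: "\<alpha> \<in> C" and a3: "cof \<alpha> = \<theta>" and a4: "lam < \<alpha>" for \<alpha>
  proof -
    have z0lam: "z0 < lam" using z0le lam_inf
      by (metis finite.emptyI lessThan_iff order_le_less_trans subsetI subset_empty)
    have alim: "\<exists>z. y < z \<and> z < \<alpha>" if "y < \<alpha>" for y
    proof (rule ccontr)
      assume nz: "\<not> ?thesis"
      define c where "c = (LEAST x. z0 < x)"
      have "z0 < c" unfolding c_def using z0lam by (rule LeastI)
      have "{..<c} = {z0}"
      proof (intro set_eqI iffI)
        fix x assume "x \<in> {..<c}"
        then have "\<not> z0 < x" unfolding c_def using not_less_Least by auto
        then show "x \<in> {z0}" using z0le[of x] by auto
      qed (use \<open>z0 < c\<close> in auto)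
      have "weakly_cofinal {y} \<alpha>" unfolding weakly_cofinal_def using that nz by (auto simp: not_less)
      moreover have "{y} \<approx> {..<c}" using \<open>{..<c} = {z0}\<close> singleton_eqpoll by simp
      ultimately have "\<theta> \<le> c" using cof_le a3 by blast
      then have "{..<\<theta>} \<subseteq> {..<c}" by auto
      then show False using thinf \<open>{..<c} = {z0}\<close> by (metis finite.emptyI finite.insertI finite_subset)
    qed
    obtain D where D: "weakly_cofinal D \<alpha>" "D \<approx> {..<\<theta>}" using cof_ex a3 by metis
    obtain \<phi> where phi: "bij_betw \<phi> D {..<\<theta>}" using D(2) unfolding eqpoll_def by blast
    obtain \<eta> where eta: "bij_betw \<eta> {..<\<theta>} E" using E(2) eqpoll_sym unfolding eqpoll_def by blast
    obtain h where h: "inj_on h {..<\<alpha>}" "h ` {..<\<alpha>} \<subseteq> {..<lam}"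
      using succ1 unfolding lepoll_def by blast
    have bound: "\<exists>\<gamma><lam. \<forall>\<zeta><\<xi>. \<eta> \<zeta> < \<gamma>" if "\<xi> < \<theta>" for \<xi>
    proof (rule ccontr)
      assume nb: "\<not> ?thesis"
      have "weakly_cofinal (\<eta> ` {..<\<xi>}) lam"
        unfolding weakly_cofinal_def
      proof (intro conjI allI impI)
        show "\<eta> ` {..<\<xi>} \<subseteq> {..<lam}" using eta E(1) that
          unfolding weakly_cofinal_def bij_betw_def by (auto dest: order.strict_trans)
      next
        fix g assume "g < lam"
        then show "\<exists>b\<in>\<eta> ` {..<\<xi>}. g \<le> b" using nb by (auto simp: not_less) (meson leD lessThan_iff)
      qed
      moreover have "\<eta> ` {..<\<xi>} \<approx> {..<\<xi>}"
        using eta that by (intro inj_on_image_eqpoll_self) (auto simp: bij_betw_def intro: inj_on_subset)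
      ultimately have "\<theta> \<le> \<xi>" using cof_le \<theta>_def by blast
      then show False using that by simp
    qed
    define \<Gamma> where "\<Gamma> \<xi> = (SOME \<gamma>. \<gamma> < lam \<and> (\<forall>\<zeta><\<xi>. \<eta> \<zeta> < \<gamma>))" for \<xi>
    have Gam: "\<Gamma> \<xi> < lam \<and> (\<forall>\<zeta><\<xi>. \<eta> \<zeta> < \<Gamma> \<xi>)" if "\<xi> < \<theta>" for \<xi>
      unfolding \<Gamma>_def using someI_ex[OF bound[OF that]] by blast
    define A where "A \<xi> = {i. i < \<alpha> \<and> (\<exists>\<zeta><\<xi>. h i \<le> \<eta> \<zeta>)}" for \<xi>
    define U where "U b = (\<Union>i\<in>A (\<phi> b). F i b)" for b
    have Usmall: "U b \<prec> {..<lam}" if "b \<in> D" for b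
    proof -
      have pb: "\<phi> b < \<theta>" using phi that unfolding bij_betw_def by auto
      define \<mu> where "\<mu> = max (\<Gamma> (\<phi> b)) chi"
      have mu: "\<mu> < lam" using Gam[OF pb] chi_lt unfolding \<mu>_def by auto
      have "A (\<phi> b) \<subseteq> {i. i < \<alpha> \<and> h i < \<Gamma> (\<phi> b)}"
        using Gam[OF pb] unfolding A_def by (auto intro: le_less_trans)
      then have "A (\<phi> b) \<lesssim> {..<\<Gamma> (\<phi> b)}"
        unfolding lepoll_def using h(1) by (intro exI[of _ h]) (auto intro: inj_on_subset)
      also have "{..<\<Gamma> (\<phi> b)} \<lesssim> {..<\<mu>}" unfolding \<mu>_def by (intro subset_imp_lepoll) auto
      finally have A1: "A (\<phi> b) \<lesssim> {..<\<mu>}" .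
      have "U b \<lesssim> A (\<phi> b) \<times> {..<chi}"
        unfolding U_def using Fsm by (intro union_lepoll_times lesspoll_imp_lepoll) blast
      also have "A (\<phi> b) \<times> {..<chi} \<lesssim> {..<\<mu>} \<times> {..<\<mu>}"
        by (rule times_lepoll_mono[OF A1 subset_imp_lepoll]) (auto simp: \<mu>_def)
      also have "{..<\<mu>} \<times> {..<\<mu>} \<prec> {..<lam}"
        using mu lam_card lam_inf by (intro square_lesspoll) (auto simp: initial_ord_def)
      finally show ?thesis .
    qed
    define B where "B = {d\<in>D. lam \<le> d}"
    have exy: "\<exists>y. y < b \<and> y \<notin> U b" if "b \<in> B" for b
    proof (rule ccontr)
      assume nz: "\<not> ?thesis"
      have lb: "lam \<le> b" using that unfolding B_def by blast
      have sub: "{..<lam} \<subseteq> U b"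
      proof
        fix x assume "x \<in> {..<lam}"
        then have "x < b" using lb by simp
        then show "x \<in> U b" using nz by blast
      qed
      have "U b \<prec> {..<lam}" using Usmall that unfolding B_def by blast
      then have "{..<lam} \<prec> {..<lam}" by (rule lesspoll_trans1[OF subset_imp_lepoll[OF sub]])
      then show False by simp
    qed
    define f where "f b = (if b \<in> B then (SOME y. y < b \<and> y \<notin> U b) else z0)" for b
    have fB: "f b < b \<and> f b \<notin> U b" if "b \<in> B" for b
      unfolding f_def using that someI_ex[OF exy[OF that]] by simp
    have reg: "regressive_on f \<alpha>"
      unfolding regressive_on_def
    proof (intro allI impI conjI)
      fix b assume "b < \<alpha>"
      show "f b < \<alpha>"
      proof (cases "b \<in> B")
        case True
        then show ?thesis using fB[OF True] \<open>b < \<alpha>\<close> by (blast intro: less_trans)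
      next
        case False
        then show ?thesis using z0lam a4 unfolding f_def by auto
      qed
      assume "\<exists>g. g < b"
      then obtain g where "g < b" by blast
      show "f b < b"
      proof (cases "b \<in> B")
        case True
        then show ?thesis using fB[OF True] by blast
      next
        case False
        then show ?thesis using z0le[of g] \<open>g < b\<close> unfolding f_def by auto
      qed
    qed
    have supB: "sup_is B \<alpha>"
      unfolding sup_is_def
    proof (intro conjI allI impI)
      show "B \<subseteq> {..<\<alpha>}" using D(1) unfolding B_def weakly_cofinal_def by auto
    next
      fix g assume "g < \<alpha>"
      then have "max g lam < \<alpha>" using a4 by simp
      then obtain z where z: "max g lam < z" "z < \<alpha>" using alim by blast
      then obtain d where "d \<in> D" "z \<le> d" using D(1) unfolding weakly_cofinal_def by blast
      then show "\<exists>x\<in>B. g < x" using z unfolding B_def by (intro bexI[of _ d]) auto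
    qed
    obtain i where i: "i < \<alpha>" and supX: "sup_is {b\<in>B. f b \<in> F i b} \<alpha>"
      using J a1 a2 reg supB by blast
    have "h i < lam" using h i by auto
    then obtain e where "e \<in> E" "h i \<le> e" using E(1) unfolding weakly_cofinal_def by blast
    then obtain \<zeta>0 where z0th: "\<zeta>0 < \<theta>" and "e = \<eta> \<zeta>0"
      using eta unfolding bij_betw_def by auto
    then have hi: "h i \<le> \<eta> \<zeta>0" using \<open>h i \<le> e\<close> by simp
    have Xsub: "\<phi> b \<le> \<zeta>0" if "b \<in> B" "f b \<in> F i b" for b
    proof (rule ccontr)
      assume "\<not> \<phi> b \<le> \<zeta>0"
      then have "i \<in> A (\<phi> b)" unfolding A_def using i hi by (auto simp: not_le)
      then have "f b \<in> U b" unfolding U_def using that by blast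
      then show False using fB that by blast
    qed
    define d0 where "d0 = inv_into D \<phi> \<zeta>0"
    have d0: "d0 \<in> D" "\<phi> d0 = \<zeta>0" using phi z0th unfolding d0_def bij_betw_def
      by (auto intro: inv_into_into f_inv_into_f)
    define Y where "Y = {d\<in>D. \<phi> d < \<zeta>0}"
    have "Y \<approx> {..<\<zeta>0}"
    proof -
      have "\<phi> ` Y = {..<\<zeta>0}"
      proof
        show "\<phi> ` Y \<subseteq> {..<\<zeta>0}" unfolding Y_def by auto
        show "{..<\<zeta>0} \<subseteq> \<phi> ` Y"
        proof
          fix x assume "x \<in> {..<\<zeta>0}"
          then have "x \<in> {..<\<theta>}" using z0th by auto
          then obtain d where "d \<in> D" "\<phi> d = x" using phi unfolding bij_betw_def by (metis imageE)
          then show "x \<in> \<phi> ` Y" using \<open>x \<in> {..<\<zeta>0}\<close> unfolding Y_def by auto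
        qed
      qed
      moreover have "inj_on \<phi> Y" using phi unfolding Y_def bij_betw_def by (auto intro: inj_on_subset)
      ultimately show ?thesis by (metis eqpoll_sym inj_on_image_eqpoll_self)
    qed
    moreover have "weakly_cofinal Y \<alpha>"
      unfolding weakly_cofinal_def
    proof (intro conjI allI impI)
      show "Y \<subseteq> {..<\<alpha>}" using D(1) unfolding Y_def weakly_cofinal_def by auto
    next
      fix g assume "g < \<alpha>"
      have "d0 < \<alpha>" using d0 D(1) unfolding weakly_cofinal_def by auto
      then have "max g d0 < \<alpha>" using \<open>g < \<alpha>\<close> by simp
      then obtain x where x: "x \<in> B" "f x \<in> F i x" "max g d0 < x" using supX unfolding sup_is_def by blast
      then have "\<phi> x \<le> \<zeta>0" using Xsub by blast
      moreover have "x \<noteq> d0" using x by auto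
      then have "\<phi> x \<noteq> \<zeta>0" using phi d0 x unfolding bij_betw_def inj_on_def B_def by auto
      ultimately have "x \<in> Y" using x unfolding Y_def B_def by auto
      then show "\<exists>b\<in>Y. g \<le> b" using x by (intro bexI[of _ x]) auto
    qed
    ultimately have "\<theta> \<le> \<zeta>0" using cof_le a3 by metis
    then show False using z0th by simp
  qed
  show ?thesis
    unfolding stationary_def
  proof
    assume "\<forall>Ca. club Ca \<longrightarrow> S \<inter> E_cof (cof lam) \<inter> Ca \<noteq> {}"
    then have "S \<inter> E_cof (cof lam) \<inter> C' \<noteq> {}" using club' by blast
    then obtain \<alpha> where "\<alpha> \<in> S" "\<alpha> \<in> C" "cof \<alpha> = \<theta>" "lam < \<alpha>"
      unfolding C'_def E_cof_def \<theta>_def by blast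
    then show False using key by blast
  qed
qed

end
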